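(* For a word $w=w_1\cdots w_n$ over $\{1,2,3,4\}$ let $s(w)=|\{i : 1\le i\le n-2,\ w_{i+2}-w_i=2\}|$. Then $$\sum_{w\in\{1,2,3,4\}^*} q^{|w|}z^{s(w)}=\frac{1}{1-4q-8q^3(z-1)-4q^4(z-1)^2}.$$
   Context: The sum ranges over all finite words over $\{1,2,3,4\}$, including the empty word; $|w|$ denotes length. $s(w)$ counts occurrences of the place-difference-value pattern $(12,(\mathbb{P},\{2\},\mathbb{P}),\{(1,2,\{2\})\},(\mathbb{P},\mathbb{P}))$. *)

theory Defs
  imports "HOL-Computational_Algebra.Polynomial" "HOL-Computational_Algebra.Formal_Power_Series"
begin

definition words :: "nat \<Rightarrow> int list set" where
  "words n = {w. length w = n \<and> set w \<subseteq> {1..4}}"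

(* s(w) = #{i : 1 <= i <= n-2, w_{i+2} - w_i = 2}, using 0-based indices *)
definition s_stat :: "int list \<Rightarrow> nat" where
  "s_stat w = card {i. i + 2 < length w \<and> w ! (i + 2) - w ! i = 2}"

definition zvar :: "int poly" where "zvar = [:0, 1:]"

definition gen_fun :: "int poly fps" where
  "gen_fun = Abs_fps (\<lambda>n. \<Sum>w\<in>words n. zvar ^ s_stat w)"

end

theory Submission
  imports Defs
begin

lemma four: "{1..4::int} = {1,2,3,4}" by auto

fun ee :: "nat \<Rightarrow> int \<Rightarrow> int poly" where
  "ee 0 x = 1"
| "ee (Suc m) x = (\<Sum>c\<in>{1..4::int}. (if c - x = 2 then zvar else 1) * ee m c)"

definition EE :: "nat \<Rightarrow> int poly" where "EE m = (\<Sum>x\<in>{1..4::int}. ee m x)"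

fun bb :: "nat \<Rightarrow> int poly" where
  "bb 0 = 1" | "bb (Suc m) = EE m"

lemma words0: "words 0 = {[]}" by (auto simp: words_def)

lemma wordsSuc: "words (Suc n) = (\<lambda>(c,w). c # w) ` ({1..4} \<times> words n)"
  unfolding words_def
  by (auto simp: image_iff length_Suc_conv) 

lemma finite_words: "finite (words n)"
  by (induction n) (auto simp: words0 wordsSuc)

lemma sum_wordsSuc:
  "(\<Sum>w\<in>words (Suc n). f w) = (\<Sum>c\<in>{1..4}. \<Sum>w\<in>words n. f (c # w))"
proof -
  have "inj_on (\<lambda>(c,w). c # w) ({1..4::int} \<times> words n)" by (auto simp: inj_on_def)
  then have "(\<Sum>w\<in>words (Suc n). f w) = (\<Sum>p\<in>{1..4} \<times> words n. f (fst p # snd p))"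
    unfolding wordsSuc by (subst sum.reindex) (auto simp: case_prod_beta)
  also have "\<dots> = (\<Sum>c\<in>{1..4}. \<Sum>w\<in>words n. f (c # w))"
    by (simp add: sum.cartesian_product case_prod_beta)
  finally show ?thesis .
qed

lemma s_cons: "s_stat (x # v) = (if 2 \<le> length v \<and> v!1 - x = 2 then 1 else 0) + s_stat v"
proof -
  let ?P = "\<lambda>i. i + 2 < length (x#v) \<and> (x#v) ! (i + 2) - (x#v) ! i = 2"
  let ?Q = "\<lambda>i. i + 2 < length v \<and> v ! (i + 2) - v ! i = 2"
  have eq: "{i. ?P i} = (if 2 \<le> length v \<and> v!1 - x = 2 then {0} else {}) \<union> Suc ` {i. ?Q i}"
    apply (auto simp: image_iff)
    apply (case_tac xa; auto simp: numeral_2_eq_2)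
    apply (case_tac xa; auto simp: numeral_2_eq_2)
    done
  have fin: "finite {i. ?Q i}" by (rule finite_subset[of _ "{..<length v}"]) auto
  have "card {i. ?P i} = card (if 2 \<le> length v \<and> v!1 - x = 2 then {0::nat} else {}) + card (Suc ` {i. ?Q i})"
    unfolding eq using finite_imageI[OF fin, of Suc] by (intro card_Un_disjoint) auto
  also have "card (Suc ` {i. ?Q i}) = card {i. ?Q i}" by (simp add: card_image)
  finally show ?thesis unfolding s_stat_def by simp
qed

lemma s_pair: "s_stat [x, y] = 0" by (simp add: s_stat_def)
lemma s_single: "s_stat [x] = 0" by (simp add: s_stat_def)
lemma s_nil: "s_stat [] = 0" by (simp add: s_stat_def)

lemma s3: "s_stat (x # y # c # w) = (if c - x = 2 then 1 else 0) + s_stat (y # c # w)"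
  by (subst s_cons) simp

lemma zp: "zvar ^ (if P then 1 else 0) = (if P then zvar else 1)" by simp

lemma Slemma:
  "(\<Sum>w\<in>words n. zvar ^ s_stat (x#y#w)) = ee ((n+1) div 2) x * ee (n div 2) y"
proof (induction n arbitrary: x y)
  case 0
  then show ?case by (simp add: words0 s_pair)
next
  case (Suc n)
  have "(\<Sum>w\<in>words (Suc n). zvar ^ s_stat (x#y#w))
      = (\<Sum>c\<in>{1..4}. \<Sum>w\<in>words n. (if c - x = 2 then zvar else 1) * zvar ^ s_stat (y#c#w))"
    by (simp add: sum_wordsSuc s3 power_add zp)
  also have "\<dots> = (\<Sum>c\<in>{1..4}. (if c - x = 2 then zvar else 1) * (ee ((n+1) div 2) y * ee (n div 2) c))"
    by (simp add: sum_distrib_left[symmetric] Suc.IH)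
  also have "\<dots> = ee ((n+1) div 2) y * ee (Suc (n div 2)) x"
    by (simp add: sum_distrib_left ac_simps)
  finally show ?case by (simp add: ac_simps)
qed

lemma coeff_gen: "fps_nth gen_fun n = bb ((n+1) div 2) * bb (n div 2)"
proof (cases n)
  case 0 then show ?thesis by (simp add: gen_fun_def words0 s_nil)
next
  case (Suc k)
  show ?thesis
  proof (cases k)
    case 0 then show ?thesis using Suc
      by (simp add: gen_fun_def sum_wordsSuc words0 s_single EE_def)
  next
    case (Suc m)
    have "fps_nth gen_fun n = (\<Sum>x\<in>{1..4}. \<Sum>y\<in>{1..4}. \<Sum>w\<in>words m. zvar ^ s_stat (x#y#w))"
      using Suc \<open>n = Suc k\<close> by (simp add: gen_fun_def sum_wordsSuc)
    also have "\<dots> = EE ((m+1) div 2) * EE (m div 2)"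
      by (simp add: Slemma EE_def sum_product)
    finally show ?thesis using Suc \<open>n = Suc k\<close> by simp
  qed
qed

lemma EE_rec: "EE (Suc (Suc m)) = 4 * EE (Suc m) + 2 * (zvar - 1) * EE m"
  by (simp add: EE_def four algebra_simps)

lemma bb_rec: "bb (Suc (Suc m)) = 4 * bb (Suc m) + 2 * (zvar - 1) * bb m"
proof (cases m)
  case 0 then show ?thesis by (simp add: EE_def four algebra_simps)
next
  case (Suc k) then show ?thesis by (simp add: EE_rec)
qed


lemma EE0: "EE 0 = 4" by (simp add: EE_def four)
lemma EE1: "EE 1 = 14 + 2 * zvar" by (simp add: EE_def four)

lemma bb2: "bb 2 = 14 + 2 * zvar" by (simp add: numeral_2_eq_2 EE1[simplified])

lemma arec: "fps_nth gen_fun (m+4) = 4 * fps_nth gen_fun (m+3) + 8 * (zvar - 1) * fps_nth gen_fun (m+1)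
   + 4 * (zvar - 1)^2 * fps_nth gen_fun m"
proof (cases "even m")
  case True
  then obtain k where k: "m = 2*k" by auto
  have e1: "(2*k+4+1) div 2 = Suc (Suc k)" "(2*k+4) div 2 = Suc (Suc k)"
    "(2*k+3+1) div 2 = Suc (Suc k)" "(2*k+3) div 2 = Suc k"
    "(2*k+1+1) div 2 = Suc k" "(2*k+1) div 2 = k" "(2*k+1) div 2 = k" "(2*k) div 2 = k" by presburger+
  show ?thesis unfolding coeff_gen k e1 bb_rec by (simp add: algebra_simps power2_eq_square)
next
  case False
  then obtain k where k: "m = 2*k+1" by (metis oddE)
  have e1: "(2*k+1+4+1) div 2 = Suc (Suc (Suc k))" "(2*k+1+4) div 2 = Suc (Suc k)"
    "(2*k+1+3+1) div 2 = Suc (Suc k)" "(2*k+1+3) div 2 = Suc (Suc k)"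
    "(2*k+1+1+1) div 2 = Suc k" "(2*k+1+1) div 2 = Suc k" "(2*k+1+1) div 2 = Suc k" "(2*k+1) div 2 = k" by presburger+
  show ?thesis unfolding coeff_gen k e1 bb_rec by (simp add: algebra_simps power2_eq_square)
qed

theorem mainTheorem7:
  shows "gen_fun * (1 - 4 * fps_X - 8 * fps_X ^ 3 * fps_const (zvar - 1)
            - 4 * fps_X ^ 4 * fps_const ((zvar - 1) ^ 2)) = 1"
proof -
  let ?g = gen_fun
  have eq: "?g * (1 - 4 * fps_X - 8 * fps_X ^ 3 * fps_const (zvar - 1)
            - 4 * fps_X ^ 4 * fps_const ((zvar - 1) ^ 2))
     = ?g - 4 * (fps_X * ?g) - 8 * (fps_const (zvar - 1) * (fps_X^3 * ?g))
       - 4 * (fps_const ((zvar - 1)^2) * (fps_X^4 * ?g))"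
    by (simp add: algebra_simps)
  show ?thesis unfolding eq
  proof (rule fps_ext)
    fix n
    show "fps_nth (?g - 4 * (fps_X * ?g) - 8 * (fps_const (zvar - 1) * (fps_X^3 * ?g))
       - 4 * (fps_const ((zvar - 1)^2) * (fps_X^4 * ?g))) n = fps_nth 1 n"
    proof (cases "n < 4")
      case True
      then have "n = 0 \<or> n = 1 \<or> n = 2 \<or> n = 3" by auto
      then show ?thesis
        apply (elim disjE)
        apply (simp_all add: fps_X_power_mult_nth coeff_gen EE0 bb2 numeral_fps_const)
        done
    next
      case False
      then obtain m where m: "n = m + 4" by (metis add.commute le_Suc_ex not_less)
      have a: "m + 4 - 1 = m + 3" "m + 4 - 3 = m + 1" by auto
      show ?thesis unfolding m using arec[of m]
        by (simp add: fps_X_power_mult_nth a numeral_fps_const) (simp add: algebra_simps)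
    qed
  qed
qed

end
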